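(* Let $C$ and $D$ be two disjoint sets of first-order formulas such that $|D|\le |C|$ and, for every $\phi\in C$, $(C\cup D)\setminus\{\phi\}\nvDash \phi$. Then $C\cup D$ is equivalent to an independent set of formulas.
   Context: Classical first-order logic; the Axiom of Choice is assumed. Two sets of formulas are equivalent if every formula of each set is a consequence of the other set (equivalently, they have the same models). A set of formulas $T$ is independent if for every $\phi\in T$, $T\setminus\{\phi\}\nvDash\phi$ (equivalently, $(T\setminus\{\phi\})\cup\{\neg\phi\}$ has a model). *)

theory Defs
  imports Main
begin

text \<open>Signature: function symbols of type 'f, predicate symbols of type 'p
  (arities are not fixed; a symbol is interpreted on argument lists).
  Variables are natural numbers.\<close>

datatype 'f trm = Var nat | Fn 'f "'f trm list"

datatype ('f, 'p) fm =
    Bot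
  | Atom 'p "'f trm list"
  | Eq "'f trm" "'f trm"
  | Imp "('f, 'p) fm" "('f, 'p) fm"
  | All nat "('f, 'p) fm"

record ('u, 'f, 'p) struct =
  dom :: "'u set"
  fint :: "'f \<Rightarrow> 'u list \<Rightarrow> 'u"
  pint :: "'p \<Rightarrow> 'u list \<Rightarrow> bool"

definition is_struct :: "('u, 'f, 'p) struct \<Rightarrow> bool" where
  "is_struct M \<longleftrightarrow> dom M \<noteq> {} \<and>
     (\<forall>f xs. set xs \<subseteq> dom M \<longrightarrow> fint M f xs \<in> dom M)"

primrec eval_trm :: "('u, 'f, 'p) struct \<Rightarrow> (nat \<Rightarrow> 'u) \<Rightarrow> 'f trm \<Rightarrow> 'u" where
  "eval_trm M s (Var n) = s n"
| "eval_trm M s (Fn f ts) = fint M f (map (eval_trm M s) ts)"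

primrec sat :: "('u, 'f, 'p) struct \<Rightarrow> (nat \<Rightarrow> 'u) \<Rightarrow> ('f, 'p) fm \<Rightarrow> bool" where
  "sat M s Bot = False"
| "sat M s (Atom P ts) = pint M P (map (eval_trm M s) ts)"
| "sat M s (Eq t u) = (eval_trm M s t = eval_trm M s u)"
| "sat M s (Imp \<phi> \<psi>) = (sat M s \<phi> \<longrightarrow> sat M s \<psi>)"
| "sat M s (All x \<phi>) = (\<forall>a\<in>dom M. sat M (s(x := a)) \<phi>)"

text \<open>Models are taken with universe a subset of the type nat + f + p,
  whose cardinality is max(aleph_0, |language|); by the downward
  Loewenheim--Skolem theorem (AC assumed) this gives the usual consequence relation.\<close>

type_synonym ('f, 'p) univ = "nat + 'f + 'p"

definition entails :: "('f, 'p) fm set \<Rightarrow> ('f, 'p) fm \<Rightarrow> bool" (infix "\<Turnstile>" 50) where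
  "T \<Turnstile> \<phi> \<longleftrightarrow>
     (\<forall>(M :: (('f, 'p) univ, 'f, 'p) struct) s.
        is_struct M \<longrightarrow> (\<forall>n. s n \<in> dom M) \<longrightarrow> (\<forall>\<psi>\<in>T. sat M s \<psi>) \<longrightarrow> sat M s \<phi>)"

definition equivalent :: "('f, 'p) fm set \<Rightarrow> ('f, 'p) fm set \<Rightarrow> bool" where
  "equivalent A B \<longleftrightarrow> (\<forall>\<phi>\<in>A. B \<Turnstile> \<phi>) \<and> (\<forall>\<phi>\<in>B. A \<Turnstile> \<phi>)"

definition independent :: "('f, 'p) fm set \<Rightarrow> bool" where
  "independent T \<longleftrightarrow> (\<forall>\<phi>\<in>T. \<not> (T - {\<phi>} \<Turnstile> \<phi>))"

end

theory Submission
  imports Defs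
begin

definition cj :: "('f,'p) fm \<Rightarrow> ('f,'p) fm \<Rightarrow> ('f,'p) fm" where
  "cj a b = Imp (Imp a (Imp b Bot)) Bot"

lemma sat_cj[simp]: "sat M s (cj a b) = (sat M s a \<and> sat M s b)"
  by (auto simp: cj_def)

lemma ent_trans: "(\<forall>y\<in>B. A \<Turnstile> y) \<Longrightarrow> B \<Turnstile> \<phi> \<Longrightarrow> A \<Turnstile> \<phi>"
  unfolding entails_def by blast

lemma ent_mem: "\<phi> \<in> A \<Longrightarrow> A \<Turnstile> \<phi>"
  unfolding entails_def by blast

lemma ent_cj: "(A \<Turnstile> cj a b) = (A \<Turnstile> a \<and> A \<Turnstile> b)"
  unfolding entails_def by auto

theorem lemma2:
  fixes C D :: "('f, 'p) fm set"
  assumes "C \<inter> D = {}"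
    and "\<exists>g. inj_on g D \<and> g ` D \<subseteq> C"
    and "\<forall>\<phi>\<in>C. \<not> ((C \<union> D) - {\<phi>} \<Turnstile> \<phi>)"
  shows "\<exists>T :: ('f, 'p) fm set. equivalent (C \<union> D) T \<and> independent T"
proof -
  obtain g where gi: "inj_on g D" and gC: "g ` D \<subseteq> C" using assms(2) by blast
  define T where "T = (C - g ` D) \<union> (\<lambda>d. cj (g d) d) ` D"
  have eq: "equivalent (C \<union> D) T"
    unfolding equivalent_def
  proof (intro conjI ballI)
    fix \<phi> assume "\<phi> \<in> C \<union> D"
    then consider "\<phi> \<in> C - g ` D" | d where "d \<in> D" "\<phi> = g d" | "\<phi> \<in> D" by blast
    then show "T \<Turnstile> \<phi>"
    proof cases
      case 1 then show ?thesis by (intro ent_mem) (simp add: T_def)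
    next
      case 2
      have "T \<Turnstile> cj (g d) d" using 2 by (intro ent_mem) (simp add: T_def)
      then show ?thesis using 2 ent_cj by blast
    next
      case 3
      have "T \<Turnstile> cj (g \<phi>) \<phi>" using 3 by (intro ent_mem) (simp add: T_def)
      then show ?thesis using ent_cj by blast
    qed
  next
    fix \<phi> assume "\<phi> \<in> T"
    then consider "\<phi> \<in> C" | d where "d \<in> D" "\<phi> = cj (g d) d" unfolding T_def by blast
    then show "C \<union> D \<Turnstile> \<phi>"
    proof cases
      case 1 then show ?thesis by (intro ent_mem) blast
    next
      case 2 then show ?thesis using gC by (simp add: ent_cj ent_mem image_subset_iff)
    qed
  qed
  have ind: "independent T"
    unfolding independent_def
  proof (intro ballI notI)
    fix x assume xT: "x \<in> T" and ent: "T - {x} \<Turnstile> x"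
    obtain c where cC: "c \<in> C" and xc: "\<And>A. A \<Turnstile> x \<Longrightarrow> A \<Turnstile> c"
      and rest: "\<forall>y\<in>T - {x}. (C \<union> D) - {c} \<Turnstile> y"
    proof (cases "x \<in> C - g ` D")
      case True
      show ?thesis
      proof (rule that[of x])
        show "x \<in> C" using True by blast
        show "\<And>A. A \<Turnstile> x \<Longrightarrow> A \<Turnstile> x" .
        show "\<forall>y\<in>T - {x}. C \<union> D - {x} \<Turnstile> y"
        proof
          fix y assume y: "y \<in> T - {x}"
          then consider "y \<in> C - g ` D" | e where "e \<in> D" "y = cj (g e) e"
            unfolding T_def by blast
          then show "C \<union> D - {x} \<Turnstile> y"
          proof cases
            case 1 then show ?thesis using y by (intro ent_mem) blast
          next
            case 2
            have "g e \<noteq> x" using True 2 by blast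
            moreover have "e \<noteq> x" using True 2 assms(1) by blast
            ultimately show ?thesis using 2 gC by (auto simp: ent_cj intro: ent_mem)
          qed
        qed
      qed
    next
      case False
      then obtain d where d: "d \<in> D" "x = cj (g d) d" using xT unfolding T_def by blast
      show ?thesis
      proof (rule that[of "g d"])
        show "g d \<in> C" using d gC by blast
        show "\<And>A. A \<Turnstile> x \<Longrightarrow> A \<Turnstile> g d" using d ent_cj by blast
        show "\<forall>y\<in>T - {x}. C \<union> D - {g d} \<Turnstile> y"
        proof
          fix y assume y: "y \<in> T - {x}"
          then consider "y \<in> C - g ` D" | e where "e \<in> D" "y = cj (g e) e"
            unfolding T_def by blast
          then show "C \<union> D - {g d} \<Turnstile> y"
          proof cases
            case 1 then show ?thesis using d by (intro ent_mem) blast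
          next
            case 2
            have "g e \<noteq> g d" using 2 d y gi by (auto dest: inj_onD)
            moreover have "e \<noteq> g d" using 2 d gC assms(1) by blast
            ultimately show ?thesis using 2 gC by (auto simp: ent_cj intro: ent_mem)
          qed
        qed
      qed
    qed
    have "(C \<union> D) - {c} \<Turnstile> x" using ent_trans[OF rest ent] .
    then have "(C \<union> D) - {c} \<Turnstile> c" by (rule xc)
    then show False using assms(3) cC by blast
  qed
  show ?thesis using eq ind by blast
qed

end
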